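(* Let $\mathcal{X}$ be an infinite instance domain, $l\ge0$ an integer, and $\mathcal{C}^l$ the class of unions of at most $l$ singletons. Then for every integer $t\ge0$, $\mathcal{S}(\mathcal{C}^l,t)=\binom{t}{\le l}$.
   Context: $\mathcal{C}^l$ is the class of functions $\mathcal{X}\to\{-1,+1\}$ of the form $x\mapsto1-2I(x\in D)$ with $D\subseteq\mathcal{X}$, $|D|\le l$. $\binom{t}{\le l}=\sum_{i=0}^{l}\binom{t}{i}$. For a depth-$t$ $\mathcal{X}$-valued tree $\mathbf{x}=(\mathbf{x}_1,\dots,\mathbf{x}_t)$, $\mathbf{x}_s:\{\pm1\}^{s-1}\to\mathcal{X}$, let $S(\mathcal{H},\mathbf{x})=\{\epsilon\in\{\pm1\}^t:\exists h\in\mathcal{H},\ \epsilon_s=h(\mathbf{x}_s(\epsilon_1,\dots,\epsilon_{s-1}))\ \forall s\}$ and $\mathcal{S}(\mathcal{H},t)=\max_{\mathbf{x}}|S(\mathcal{H},\mathbf{x})|$ for $t\ge1$; $\mathcal{S}(\mathcal{H},0)=1$ if $\mathcal{H}\ne\emptyset$. *)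

theory Defs
  imports Main
begin

text \<open>Signs are represented as integers in {-1, 1}.  A depth-t X-valued tree
  x = (x_1,...,x_t), x_s : {+-1}^(s-1) -> X, is represented by a single function
  from sign-prefixes (int lists) to X: the node x_{s+1}(eps_1..eps_s) is
  x [eps_1,...,eps_s]. Only prefixes of length < t are relevant.\<close>

definition singleton_unions :: "nat \<Rightarrow> ('x \<Rightarrow> int) set" where
  "singleton_unions l = {h. \<exists>D. finite D \<and> card D \<le> l \<and>
      h = (\<lambda>x. 1 - 2 * (if x \<in> D then 1 else 0))}"

definition shattered_paths :: "('x \<Rightarrow> int) set \<Rightarrow> (int list \<Rightarrow> 'x) \<Rightarrow> nat \<Rightarrow> int list set" where
  "shattered_paths H x t = {\<epsilon>. length \<epsilon> = t \<and> set \<epsilon> \<subseteq> {-1, 1} \<and>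
      (\<exists>h\<in>H. \<forall>s<t. \<epsilon> ! s = h (x (take s \<epsilon>)))}"

definition seq_growth :: "('x \<Rightarrow> int) set \<Rightarrow> nat \<Rightarrow> nat" where
  "seq_growth H t = (if t = 0 then (if H \<noteq> {} then 1 else 0)
      else Max {card (shattered_paths H x t) | x. True})"

definition binom_le :: "nat \<Rightarrow> nat \<Rightarrow> nat" where
  "binom_le t l = (\<Sum>i\<le>l. t choose i)"

end

theory Submission
  imports Defs "HOL-Library.Countable"
begin

lemma count_subsets:
  "card {S. S \<subseteq> {..<t} \<and> card S \<le> l} = binom_le t l"
proof (induction l)
  case 0
  have "{S. S \<subseteq> {..<t} \<and> card S \<le> 0} = {{}}"
  proof (intro set_eqI iffI)
    fix S assume "S \<in> {S. S \<subseteq> {..<t} \<and> card S \<le> 0}"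
    then have "finite S" "card S = 0" using finite_subset[of S "{..<t}"] by auto
    then show "S \<in> {{}}" by simp
  qed auto
  then show ?case by (simp add: binom_le_def)
next
  case (Suc l)
  have eq: "{S. S \<subseteq> {..<t} \<and> card S \<le> Suc l} =
     {S. S \<subseteq> {..<t} \<and> card S \<le> l} \<union> {S. S \<subseteq> {..<t} \<and> card S = Suc l}"
    by auto
  have f1: "finite {S. S \<subseteq> {..<t} \<and> card S \<le> l}" by (rule finite_subset[of _ "Pow {..<t}"]) auto
  have f2: "finite {S. S \<subseteq> {..<t} \<and> card S = Suc l}" by (rule finite_subset[of _ "Pow {..<t}"]) auto
  have "card {S. S \<subseteq> {..<t} \<and> card S \<le> Suc l} = binom_le t l + (t choose Suc l)"
    unfolding eq using Suc f1 f2 by (subst card_Un_disjoint) (auto simp: n_subsets)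
  then show ?case by (simp add: binom_le_def)
qed

lemma fin_target: "finite {S. S \<subseteq> {..<t} \<and> card (S::nat set) \<le> l}"
  by (rule finite_subset[of _ "Pow {..<t}"]) auto

lemma sh_vals:
  assumes "e \<in> shattered_paths (singleton_unions l) x t"
  obtains D where "finite D" "card D \<le> l" "length e = t"
    "\<forall>s<t. e ! s = (if x (take s e) \<in> D then -1 else 1)"
  using assms unfolding shattered_paths_def singleton_unions_def by auto

lemma upper:
  "card (shattered_paths (singleton_unions l) x t) \<le> binom_le t l"
proof -
  let ?P = "shattered_paths (singleton_unions l) x t"
  define nn where "nn e = {s. s < t \<and> e ! s = (-1::int) \<and> (\<forall>s'<s. x (take s' e) \<noteq> x (take s e))}" for e
  have img: "nn ` ?P \<subseteq> {S. S \<subseteq> {..<t} \<and> card S \<le> l}"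
  proof
    fix S assume "S \<in> nn ` ?P"
    then obtain e where e: "e \<in> ?P" and S: "S = nn e" by auto
    obtain D where D: "finite D" "card D \<le> l" "length e = t"
      "\<forall>s<t. e ! s = (if x (take s e) \<in> D then -1 else 1)" using sh_vals[OF e] by blast
    have inj: "inj_on (\<lambda>s. x (take s e)) S"
    proof (rule inj_onI)
      fix a b assume a: "a \<in> S" and b: "b \<in> S" and ab: "x (take a e) = x (take b e)"
      show "a = b"
      proof (rule ccontr)
        assume "a \<noteq> b"
        then consider "a < b" | "b < a" by linarith
        then show False using a b ab unfolding S nn_def by (cases; auto)
      qed
    qed
    have "(\<lambda>s. x (take s e)) ` S \<subseteq> D"
    proof
      fix v assume "v \<in> (\<lambda>s. x (take s e)) ` S"
      then obtain s where "s \<in> S" "v = x (take s e)" by auto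
      then show "v \<in> D" using D(4) unfolding S nn_def by (auto split: if_splits)
    qed
    then have "card S \<le> card D" using card_inj_on_le[OF inj] D(1) by blast
    then show "S \<in> {S. S \<subseteq> {..<t} \<and> card S \<le> l}" using D(2) unfolding S nn_def by auto
  qed
  have injnn: "inj_on nn ?P"
  proof (rule inj_onI)
    fix e e' assume e: "e \<in> ?P" and e': "e' \<in> ?P" and eq: "nn e = nn e'"
    obtain D where D: "finite D" "card D \<le> l" "length e = t"
      "\<forall>s<t. e ! s = (if x (take s e) \<in> D then -1 else 1)" using sh_vals[OF e] by blast
    obtain D' where D': "finite D'" "card D' \<le> l" "length e' = t"
      "\<forall>s<t. e' ! s = (if x (take s e') \<in> D' then -1 else 1)" using sh_vals[OF e'] by blast
    have "s \<le> t \<Longrightarrow> take s e = take s e'" for s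
    proof (induction s)
      case 0 then show ?case by simp
    next
      case (Suc s)
      then have st: "s < t" and IH: "take s e = take s e'" by auto
      have tk: "take s' e = take s' e'" if "s' \<le> s" for s'
        using IH that by (metis min.absorb1 take_take)
      have "e ! s = e' ! s"
      proof (cases "\<exists>s'<s. x (take s' e) = x (take s e)")
        case True
        then obtain s' where s': "s' < s" "x (take s' e) = x (take s e)" by auto
        have "e ! s = e ! s'" using D(4) s' st by simp
        moreover have "e' ! s = e' ! s'" using D'(4) s' st tk[of s'] IH by simp
        moreover have "e ! s' = e' ! s'" using IH s' by (metis nth_take)
        ultimately show ?thesis by simp
      next
        case False
        have F': "\<not> (\<exists>s'<s. x (take s' e') = x (take s e'))"
          using False tk IH by auto
        have "s \<in> nn e \<longleftrightarrow> e ! s = -1" using False st unfolding nn_def by auto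
        moreover have "s \<in> nn e' \<longleftrightarrow> e' ! s = -1" using F' st unfolding nn_def by auto
        moreover have "e ! s = -1 \<or> e ! s = 1" using D(4) st by auto
        moreover have "e' ! s = -1 \<or> e' ! s = 1" using D'(4) st by auto
        ultimately show ?thesis using eq by auto
      qed
      then show ?case using IH st D(3) D'(3) by (simp add: take_Suc_conv_app_nth)
    qed
    then show "e = e'" using D(3) D'(3) by (metis order_refl take_all)
  qed
  have "card ?P \<le> card {S. S \<subseteq> {..<t} \<and> card S \<le> l}"
    by (rule card_inj_on_le[OF injnn img fin_target])
  then show ?thesis using count_subsets by simp
qed

lemma finP: "finite (shattered_paths H x t)"
  by (rule finite_subset[OF _ finite_lists_length_eq[of "{-1,1::int}" t]])
     (auto simp: shattered_paths_def)

lemma lower: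
  assumes "inj (x :: int list \<Rightarrow> 'x)"
  shows "binom_le t l \<le> card (shattered_paths (singleton_unions l) x t)"
proof -
  let ?P = "shattered_paths (singleton_unions l) x t"
  define ep where "ep T = map (\<lambda>s. if s \<in> T then -1 else (1::int)) [0..<t]" for T :: "nat set"
  have mem: "ep T \<in> ?P" if T: "T \<subseteq> {..<t}" "card T \<le> l" for T
  proof -
    have fT: "finite T" using T(1) finite_subset by blast
    define D where "D = (\<lambda>s. x (take s (ep T))) ` T"
    have cD: "card D \<le> l" using card_image_le[OF fT] T(2) unfolding D_def by (meson le_trans)
    have hin: "(\<lambda>y. 1 - 2 * (if y \<in> D then 1 else 0)) \<in> singleton_unions l"
      unfolding singleton_unions_def D_def using fT cD D_def by auto
    have len: "length (ep T) = t" by (simp add: ep_def)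
    have key: "x (take s (ep T)) \<in> D \<longleftrightarrow> s \<in> T" if s: "s < t" for s
    proof
      assume "x (take s (ep T)) \<in> D"
      then obtain s' where s': "s' \<in> T" "x (take s' (ep T)) = x (take s (ep T))" unfolding D_def by auto
      then have "take s' (ep T) = take s (ep T)" using assms by (simp add: inj_eq)
      then have "length (take s' (ep T)) = length (take s (ep T))" by simp
      then have "s' = s" using len s s' T(1) by auto
      then show "s \<in> T" using s' by simp
    qed (auto simp: D_def)
    have "\<forall>s<t. ep T ! s = (\<lambda>y. 1 - 2 * (if y \<in> D then 1 else 0)) (x (take s (ep T)))"
      using key by (auto simp: ep_def)
    moreover have "set (ep T) \<subseteq> {-1,1}" by (auto simp: ep_def)
    ultimately show ?thesis using hin len unfolding shattered_paths_def
      by (intro CollectI conjI bexI[OF _ hin]) auto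
  qed
  have inj: "inj_on ep {S. S \<subseteq> {..<t} \<and> card S \<le> l}"
  proof (rule inj_onI)
    fix A B assume A: "A \<in> {S. S \<subseteq> {..<t} \<and> card S \<le> l}" and B: "B \<in> {S. S \<subseteq> {..<t} \<and> card S \<le> l}"
      and eq: "ep A = ep B"
    show "A = B"
    proof (rule set_eqI)
      fix s
      show "s \<in> A \<longleftrightarrow> s \<in> B"
      proof (cases "s < t")
        case True
        then have "ep A ! s = ep B ! s" using eq by simp
        then show ?thesis using True by (auto simp: ep_def split: if_splits)
      next
        case False then show ?thesis using A B by auto
      qed
    qed
  qed
  have "card {S. S \<subseteq> {..<t} \<and> card S \<le> l} \<le> card ?P"
    by (rule card_inj_on_le[OF inj _ finP]) (auto intro: mem)
  then show ?thesis using count_subsets by simp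
qed

theorem mainTheorem18:
  fixes l t :: nat
  assumes "infinite (UNIV :: 'x set)"
  shows "seq_growth (singleton_unions l :: ('x \<Rightarrow> int) set) t = binom_le t l"
proof (cases "t = 0")
  case True
  have "(\<lambda>y::'x. 1 - 2 * (if y \<in> {} then 1 else 0)) \<in> singleton_unions l"
    unfolding singleton_unions_def by auto
  then have "singleton_unions l \<noteq> ({} :: ('x \<Rightarrow> int) set)" by auto
  have "(\<Sum>i\<le>l. (0::nat) choose i) = 1"
    by (induction l) auto
  then show ?thesis using True \<open>singleton_unions l \<noteq> {}\<close> by (simp add: seq_growth_def binom_le_def)
next
  case False
  obtain f :: "nat \<Rightarrow> 'x" where f: "inj f" using infinite_countable_subset[OF assms] by blast
  define x0 where "x0 = f \<circ> (to_nat :: int list \<Rightarrow> nat)"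
  have ix: "inj x0" unfolding x0_def using f by (simp add: inj_compose)
  let ?S = "{card (shattered_paths (singleton_unions l :: ('x \<Rightarrow> int) set) x t) | x. True}"
  have "Max ?S = binom_le t l"
  proof (rule Max_eqI)
    show "finite ?S" by (rule finite_subset[of _ "{..binom_le t l}"]) (auto intro: upper)
    show "y \<le> binom_le t l" if "y \<in> ?S" for y using that upper by auto
    show "binom_le t l \<in> ?S"
      using lower[OF ix, of t l] upper[of l x0 t] by auto
  qed
  then show ?thesis using False by (simp add: seq_growth_def)
qed

end
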